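(* Let $\Gamma$ be a Cayley graph on $n$ vertices, and let $s$ be the order of the stabilizer in $\operatorname{Aut}(\Gamma)$ of a vertex. Then $\Gamma$ is $k$-uniformly vertex-transitive for every integer $k$ with $1\le k\le s$.
   Context: A Cayley graph $C(G,S)$, for a finite group $G$ and subset $S\subset G$, has vertex set $G$, with $a,b$ adjacent iff $a=sb$ or $b=sa$ for some $s\in S$; a graph is Cayley if isomorphic to some $C(G,S)$. A permutation $\sigma$ of $V(\Gamma)$ is identified with its permutation matrix (the $(u,v)$ entry is $1$ iff $\sigma(u)=v$); $J_n$ is the $n\times n$ all-ones matrix. For $k\ge1$, $\Gamma$ is $k$-uniformly vertex-transitive if there is a set of $kn$ distinct automorphisms $\{\sigma_1,\ldots,\sigma_{kn}\}\subset\operatorname{Aut}(\Gamma)$ with $\sum_i\sigma_i=kJ_n$. *)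

theory Defs
  imports "HOL-Algebra.Group" "HOL-Combinatorics.Permutations"
begin

definition cayley_adj :: "('g, 'b) monoid_scheme \<Rightarrow> 'g set \<Rightarrow> 'g \<Rightarrow> 'g \<Rightarrow> bool" where
  "cayley_adj G S a b \<longleftrightarrow> (\<exists>s\<in>S. a = s \<otimes>\<^bsub>G\<^esub> b \<or> b = s \<otimes>\<^bsub>G\<^esub> a)"

definition is_cayley_graph :: "'a set \<Rightarrow> ('a \<Rightarrow> 'a \<Rightarrow> bool) \<Rightarrow> bool" where
  "is_cayley_graph V E \<longleftrightarrow>
     (\<exists>(G :: 'a monoid) S f. group G \<and> finite (carrier G) \<and> S \<subseteq> carrier G \<and>
        bij_betw f V (carrier G) \<and>
        (\<forall>u\<in>V. \<forall>v\<in>V. E u v \<longleftrightarrow> cayley_adj G S (f u) (f v)))"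

definition graph_aut :: "'a set \<Rightarrow> ('a \<Rightarrow> 'a \<Rightarrow> bool) \<Rightarrow> ('a \<Rightarrow> 'a) set" where
  "graph_aut V E = {\<sigma>. \<sigma> permutes V \<and> (\<forall>u\<in>V. \<forall>v\<in>V. E u v \<longleftrightarrow> E (\<sigma> u) (\<sigma> v))}"

definition vertex_stabilizer :: "'a set \<Rightarrow> ('a \<Rightarrow> 'a \<Rightarrow> bool) \<Rightarrow> 'a \<Rightarrow> ('a \<Rightarrow> 'a) set" where
  "vertex_stabilizer V E v = {\<sigma> \<in> graph_aut V E. \<sigma> v = v}"

text \<open>k-uniformly vertex-transitive: a set of k*n distinct automorphisms whose permutation
  matrices sum to k J_n, i.e. entry (u,w) of the sum, the number of sigma with sigma u = w, equals k.\<close>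
definition k_uniformly_vt :: "nat \<Rightarrow> 'a set \<Rightarrow> ('a \<Rightarrow> 'a \<Rightarrow> bool) \<Rightarrow> bool" where
  "k_uniformly_vt k V E \<longleftrightarrow>
     (\<exists>A. A \<subseteq> graph_aut V E \<and> finite A \<and> card A = k * card V \<and>
        (\<forall>u\<in>V. \<forall>w\<in>V. (\<Sum>\<sigma>\<in>A. (if \<sigma> u = w then 1 else 0 :: nat)) = k))"

end

theory Submission
  imports Defs
begin

lemma cayley_adj_shift:
  fixes G (structure)
  assumes "group G" "S \<subseteq> carrier G" "a \<in> carrier G" "b \<in> carrier G" "h \<in> carrier G"
  shows "cayley_adj G S (a \<otimes> h) (b \<otimes> h) \<longleftrightarrow> cayley_adj G S a b"
proof -
  interpret group G by fact
  have "\<And>s. s \<in> S \<Longrightarrow> (a \<otimes> h = s \<otimes> (b \<otimes> h) \<longleftrightarrow> a = s \<otimes> b) \<and> (b \<otimes> h = s \<otimes> (a \<otimes> h) \<longleftrightarrow> b = s \<otimes> a)"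
  proof -
    fix s assume "s \<in> S"
    hence s: "s \<in> carrier G" using assms by auto
    show "?thesis s"
      using s assms(3-5) by (simp add: m_assoc[symmetric])
  qed
  thus ?thesis unfolding cayley_adj_def by blast
qed

theorem mainTheorem13:
  fixes V :: "'a set" and E :: "'a \<Rightarrow> 'a \<Rightarrow> bool" and v :: 'a and k :: nat
  assumes "finite V"
    and "is_cayley_graph V E"
    and "v \<in> V"
    and "1 \<le> k"
    and "k \<le> card (vertex_stabilizer V E v)"
  shows "k_uniformly_vt k V E"
proof -
  obtain G :: "'a monoid" and S f where grp: "group G" and fin: "finite (carrier G)"
    and SG: "S \<subseteq> carrier G" and bij: "bij_betw f V (carrier G)"
    and adj: "\<And>u w. u \<in> V \<Longrightarrow> w \<in> V \<Longrightarrow> E u w \<longleftrightarrow> cayley_adj G S (f u) (f w)"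
    using assms(2) unfolding is_cayley_graph_def by blast
  interpret group G by (rule grp)
  define g where "g = inv_into V f"
  have gf: "\<And>u. u \<in> V \<Longrightarrow> g (f u) = u" using bij unfolding g_def
    by (simp add: bij_betw_inv_into_left)
  have fg: "\<And>x. x \<in> carrier G \<Longrightarrow> f (g x) = x" using bij unfolding g_def
    by (simp add: bij_betw_inv_into_right)
  have gV: "\<And>x. x \<in> carrier G \<Longrightarrow> g x \<in> V" using bij unfolding g_def
    by (metis bij_betw_def inv_into_into)
  have fG: "\<And>u. u \<in> V \<Longrightarrow> f u \<in> carrier G" using bij bij_betwE by blast
  define \<rho> where "\<rho> h u = (if u \<in> V then g (f u \<otimes>\<^bsub>G\<^esub> h) else u)" for h u
  have \<rho>V: "\<And>h u. h \<in> carrier G \<Longrightarrow> u \<in> V \<Longrightarrow> \<rho> h u \<in> V"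
    unfolding \<rho>_def using gV fG by auto
  have \<rho>f: "\<And>h u. h \<in> carrier G \<Longrightarrow> u \<in> V \<Longrightarrow> f (\<rho> h u) = f u \<otimes>\<^bsub>G\<^esub> h"
    unfolding \<rho>_def using fg fG by auto
  have \<rho>eq: "\<And>h x w. h \<in> carrier G \<Longrightarrow> x \<in> V \<Longrightarrow> w \<in> V \<Longrightarrow>
      \<rho> h x = w \<longleftrightarrow> h = inv\<^bsub>G\<^esub> (f x) \<otimes>\<^bsub>G\<^esub> f w"
  proof -
    fix h x w assume h: "h \<in> carrier G" and x: "x \<in> V" and w: "w \<in> V"
    have "\<rho> h x = w \<longleftrightarrow> f (\<rho> h x) = f w"
      using bij \<rho>V[OF h x] w unfolding bij_betw_def inj_on_def by blast
    also have "\<dots> \<longleftrightarrow> f x \<otimes>\<^bsub>G\<^esub> h = f w" using \<rho>f[OF h x] by simp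
    also have "\<dots> \<longleftrightarrow> h = inv\<^bsub>G\<^esub> (f x) \<otimes>\<^bsub>G\<^esub> f w"
      using fG[OF x] fG[OF w] h
      by (metis inv_solve_left)
    finally show "\<rho> h x = w \<longleftrightarrow> h = inv\<^bsub>G\<^esub> (f x) \<otimes>\<^bsub>G\<^esub> f w" .
  qed
  have \<rho>aut: "\<rho> h \<in> graph_aut V E" if h: "h \<in> carrier G" for h
  proof -
    have "bij_betw (\<rho> h) V V"
    proof (rule bij_betw_byWitness[where f'="\<rho> (inv\<^bsub>G\<^esub> h)"])
      show "\<forall>a\<in>V. \<rho> (inv\<^bsub>G\<^esub> h) (\<rho> h a) = a"
        using h \<rho>eq \<rho>V \<rho>f fG by (simp add: m_assoc inv_mult_group)
      show "\<forall>a'\<in>V. \<rho> h (\<rho> (inv\<^bsub>G\<^esub> h) a') = a'"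
        using h \<rho>eq \<rho>V \<rho>f fG by (simp add: m_assoc inv_mult_group)
      show "\<rho> h ` V \<subseteq> V" using \<rho>V h by auto
      show "\<rho> (inv\<^bsub>G\<^esub> h) ` V \<subseteq> V" using \<rho>V h by auto
    qed
    hence "\<rho> h permutes V" by (rule bij_imp_permutes) (simp add: \<rho>_def)
    moreover have "\<forall>u\<in>V. \<forall>w\<in>V. E u w \<longleftrightarrow> E (\<rho> h u) (\<rho> h w)"
      using adj \<rho>V[OF h] \<rho>f[OF h] cayley_adj_shift[OF grp SG fG fG h] by simp
    ultimately show ?thesis unfolding graph_aut_def by blast
  qed
  obtain K where KS: "K \<subseteq> vertex_stabilizer V E v" and cK: "card K = k" and fK: "finite K"
    using obtain_subset_with_card_n[OF assms(5)] by metis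
  have Kaut: "\<And>\<tau>. \<tau> \<in> K \<Longrightarrow> \<tau> \<in> graph_aut V E" and Kv: "\<And>\<tau>. \<tau> \<in> K \<Longrightarrow> \<tau> v = v"
    using KS unfolding vertex_stabilizer_def by auto
  have Kperm: "\<And>\<tau>. \<tau> \<in> K \<Longrightarrow> \<tau> permutes V" using Kaut unfolding graph_aut_def by auto
  define F :: "'a \<times> ('a \<Rightarrow> 'a) \<Rightarrow> 'a \<Rightarrow> 'a" where "F = (\<lambda>(h, \<tau>). \<rho> h \<circ> \<tau>)"
  define A where "A = F ` (carrier G \<times> K)"
  have comp_aut: "\<And>\<sigma> \<tau>. \<sigma> \<in> graph_aut V E \<Longrightarrow> \<tau> \<in> graph_aut V E \<Longrightarrow> \<sigma> \<circ> \<tau> \<in> graph_aut V E"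
  proof -
    fix \<sigma> \<tau> assume s: "\<sigma> \<in> graph_aut V E" and t: "\<tau> \<in> graph_aut V E"
    have sp: "\<sigma> permutes V" and tp: "\<tau> permutes V" using s t unfolding graph_aut_def by auto
    have "\<sigma> \<circ> \<tau> permutes V" using permutes_compose[OF tp sp] .
    moreover have "\<forall>u\<in>V. \<forall>w\<in>V. E u w \<longleftrightarrow> E ((\<sigma> \<circ> \<tau>) u) ((\<sigma> \<circ> \<tau>) w)"
    proof (intro ballI)
      fix u w assume u: "u \<in> V" and w: "w \<in> V"
      have tu: "\<tau> u \<in> V" and tw: "\<tau> w \<in> V" using permutes_in_image[OF tp] u w by (simp_all only:)
      have "E u w \<longleftrightarrow> E (\<tau> u) (\<tau> w)" using t u w unfolding graph_aut_def by blast
      also have "\<dots> \<longleftrightarrow> E (\<sigma> (\<tau> u)) (\<sigma> (\<tau> w))" using s tu tw unfolding graph_aut_def by blast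
      finally show "E u w \<longleftrightarrow> E ((\<sigma> \<circ> \<tau>) u) ((\<sigma> \<circ> \<tau>) w)" by simp
    qed
    ultimately show "\<sigma> \<circ> \<tau> \<in> graph_aut V E" unfolding graph_aut_def by blast
  qed
  have Asub: "A \<subseteq> graph_aut V E"
    unfolding A_def F_def using comp_aut[OF \<rho>aut Kaut] by auto
  have injF: "inj_on F (carrier G \<times> K)"
  proof (rule inj_onI)
    fix p q assume p: "p \<in> carrier G \<times> K" and q: "q \<in> carrier G \<times> K" and e: "F p = F q"
    obtain h1 t1 where p': "p = (h1, t1)" by force
    obtain h2 t2 where q': "q = (h2, t2)" by force
    have h1: "h1 \<in> carrier G" and t1: "t1 \<in> K" and h2: "h2 \<in> carrier G" and t2: "t2 \<in> K"
      using p q p' q' by auto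
    have e': "\<And>x. \<rho> h1 (t1 x) = \<rho> h2 (t2 x)" using e p' q' unfolding F_def by (metis comp_apply case_prod_conv)
    have "\<rho> h1 v = \<rho> h2 v" using e'[of v] Kv[OF t1] Kv[OF t2] by simp
    hence "h1 = h2" using \<rho>eq[OF h1 assms(3) \<rho>V[OF h2 assms(3)]] \<rho>eq[OF h2 assms(3) \<rho>V[OF h2 assms(3)]]
      by simp
    moreover have "inj (\<rho> h1)" using \<rho>aut[OF h1] permutes_inj unfolding graph_aut_def by blast
    ultimately have "t1 = t2" using e' by (metis injD ext)
    thus "p = q" using p' q' \<open>h1 = h2\<close> by simp
  qed
  have cA: "card A = k * card V"
    unfolding A_def using card_image[OF injF] cK bij_betw_same_card[OF bij] fin fK
    by (simp add: card_cartesian_product)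
  have cnt: "(\<Sum>\<sigma>\<in>A. (if \<sigma> u = w then 1 else 0 :: nat)) = k" if u: "u \<in> V" and w: "w \<in> V" for u w
  proof -
    have "(\<Sum>\<sigma>\<in>A. (if \<sigma> u = w then 1 else 0 :: nat))
        = (\<Sum>p\<in>carrier G \<times> K. (if F p u = w then 1 else 0))"
      unfolding A_def by (subst sum.reindex[OF injF]) (simp only: o_def)
    also have "\<dots> = (\<Sum>h\<in>carrier G. \<Sum>\<tau>\<in>K. (if \<rho> h (\<tau> u) = w then 1 else 0))"
      unfolding F_def by (subst sum.cartesian_product) (rule sum.cong[OF refl], simp add: case_prod_beta)
    also have "\<dots> = (\<Sum>\<tau>\<in>K. \<Sum>h\<in>carrier G. (if \<rho> h (\<tau> u) = w then 1 else 0))"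
      by (rule sum.swap)
    also have "\<dots> = (\<Sum>\<tau>\<in>K. 1)"
    proof (rule sum.cong[OF refl])
      fix \<tau> assume t: "\<tau> \<in> K"
      have tu: "\<tau> u \<in> V" using permutes_in_image[OF Kperm[OF t]] u by (simp only:)
      have "(\<Sum>h\<in>carrier G. (if \<rho> h (\<tau> u) = w then 1 else 0 :: nat))
          = (\<Sum>h\<in>carrier G. (if h = inv\<^bsub>G\<^esub> (f (\<tau> u)) \<otimes>\<^bsub>G\<^esub> f w then 1 else 0))"
      proof (rule sum.cong[OF refl])
        fix h assume h: "h \<in> carrier G"
        show "(if \<rho> h (\<tau> u) = w then 1 else 0 :: nat) = (if h = inv\<^bsub>G\<^esub> (f (\<tau> u)) \<otimes>\<^bsub>G\<^esub> f w then 1 else 0)"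
          using \<rho>eq[OF h tu w] by (simp only:)
      qed
      also have "\<dots> = 1" using fin fG[OF tu] fG[OF w] by (simp add: sum.delta)
      finally show "(\<Sum>h\<in>carrier G. (if \<rho> h (\<tau> u) = w then 1 else 0 :: nat)) = 1" .
    qed
    also have "\<dots> = k" using cK by simp
    finally show ?thesis .
  qed
  show ?thesis unfolding k_uniformly_vt_def
    using Asub cA cnt fin fK unfolding A_def by blast
qed

end
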